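(* Assume the standing hypotheses below, and fix $n < \omega$. Let $X_n$ be a basis of the free group $G_n$, and let $\mathcal{B}_n$ be the family of all subgroups of $G_n$ generated by subsets of $X_n$. Then the collection $$\mathcal{B}'_n = \{ A \in \mathcal{B}_n : A + G_i \text{ is a pure subgroup of } G \text{ for every } i < \omega \}$$ is a $G(\aleph_0)$-family of the group $G_n$, all of whose members are pure subgroups of $G$.
   Context: Standing hypotheses: $G$ is a torsion-free abelian group and $0 = G_0 < G_1 < \dots < G_n < \dots$ ($n<\omega$) is an ascending chain of subgroups of $G$ such that every $G_n$ is free, every $G_n$ is a pure subgroup of $G$, and $G = \bigcup_{n<\omega} G_n$. A subgroup $H$ of an abelian group $G$ is pure if solubility in $G$ of every equation $nx = h$ with $n\in\mathbb{Z}$, $h\in H$ implies its solubility in $H$. A $G(\aleph_0)$-family of an abelian group $M$ is a collection $\mathcal{C}$ of subgroups of $M$ such that: (i) $0 \in \mathcal{C}$ and $M \in \mathcal{C}$; (ii) $\mathcal{C}$ is closed under unions of ascending chains; (iii) for every $A_0 \in \mathcal{C}$ and every countable subset $H \subseteq M$ there exists $A \in \mathcal{C}$ with $A_0 \cup H \subseteq A$ and $A/A_0$ countable. *)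

theory Defs
  imports "HOL-Algebra.Algebra" "HOL-Library.Countable_Set"
begin

text \<open>Abelian groups are written multiplicatively (HOL-Algebra); integer
multiples n x are the integer powers x [^] n.\<close>

definition torsion_free :: "('a, 'b) monoid_scheme \<Rightarrow> bool" where
  "torsion_free G \<longleftrightarrow>
     (\<forall>x\<in>carrier G. \<forall>k::int. k \<noteq> 0 \<longrightarrow> pow G x k = one G \<longrightarrow> x = one G)"

definition pure_subgroup :: "'a set \<Rightarrow> ('a, 'b) monoid_scheme \<Rightarrow> bool" where
  "pure_subgroup H G \<longleftrightarrow> subgroup H G \<and>
     (\<forall>k::int. \<forall>h\<in>H. (\<exists>x\<in>carrier G. pow G x k = h) \<longrightarrow> (\<exists>y\<in>H. pow G y k = h))"

definition is_basis :: "('a, 'b) monoid_scheme \<Rightarrow> 'a set \<Rightarrow> 'a set \<Rightarrow> bool" where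
  "is_basis G H B \<longleftrightarrow> B \<subseteq> H \<and> generate G B = H \<and>
     (\<forall>F f. finite F \<longrightarrow> F \<subseteq> B \<longrightarrow>
        finprod G (\<lambda>x. pow G x (f x :: int)) F = one G \<longrightarrow> (\<forall>x\<in>F. f x = 0))"

definition free_subgroup :: "'a set \<Rightarrow> ('a, 'b) monoid_scheme \<Rightarrow> bool" where
  "free_subgroup H G \<longleftrightarrow> subgroup H G \<and> (\<exists>B. is_basis G H B)"

definition countable_quotient :: "('a, 'b) monoid_scheme \<Rightarrow> 'a set \<Rightarrow> 'a set \<Rightarrow> bool" where
  "countable_quotient G A A0 \<longleftrightarrow> countable {r_coset G A0 a | a. a \<in> A}"

text \<open>A G(aleph_0)-family of the subgroup M of G.  "Ascending chains" are
  read as arbitrary nonempty chains (under inclusion) of members.\<close>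
definition G_aleph0_family :: "('a, 'b) monoid_scheme \<Rightarrow> 'a set \<Rightarrow> 'a set set \<Rightarrow> bool" where
  "G_aleph0_family G M C \<longleftrightarrow>
     (\<forall>A\<in>C. subgroup A G \<and> A \<subseteq> M) \<and>
     {one G} \<in> C \<and> M \<in> C \<and>
     (\<forall>S. S \<subseteq> C \<longrightarrow> S \<noteq> {} \<longrightarrow> (\<forall>A\<in>S. \<forall>B\<in>S. A \<subseteq> B \<or> B \<subseteq> A) \<longrightarrow> \<Union>S \<in> C) \<and>
     (\<forall>A0\<in>C. \<forall>H. H \<subseteq> M \<longrightarrow> countable H \<longrightarrow>
        (\<exists>A\<in>C. A0 \<union> H \<subseteq> A \<and> countable_quotient G A A0))"

end

theory Submission
  imports Defs
begin

context comm_group begin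

lemma directed_Union_subgroup:
  assumes "S \<noteq> {}" "\<And>A. A\<in>S \<Longrightarrow> subgroup A G"
    and "\<And>A B. A\<in>S \<Longrightarrow> B\<in>S \<Longrightarrow> \<exists>C\<in>S. A \<union> B \<subseteq> C"
  shows "subgroup (\<Union>S) G"
proof (rule subgroup.intro)
  show "\<Union>S \<subseteq> carrier G" using assms(2) subgroup.subset by blast
  show "\<one> \<in> \<Union>S" using assms(1,2) subgroup.one_closed by blast
  show "inv x \<in> \<Union>S" if x0: "x \<in> \<Union>S" for x
  proof -
    obtain A where A: "A \<in> S" "x \<in> A" using x0 by blast
    have "inv x \<in> A" by (rule subgroup.m_inv_closed[OF assms(2)[OF A(1)] A(2)])
    then show ?thesis using A(1) by blast
  qed
  show "x \<otimes> y \<in> \<Union>S" if xy: "x \<in> \<Union>S" "y \<in> \<Union>S" for x y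
  proof -
    obtain A B where AB: "A\<in>S" "B\<in>S" "x\<in>A" "y\<in>B" using xy by blast
    then obtain C where C: "C\<in>S" "A\<union>B\<subseteq>C" using assms(3) by blast
    have "x \<in> C" "y \<in> C" using AB C by auto
    then have "x \<otimes> y \<in> C" by (rule subgroup.m_closed[OF assms(2)[OF C(1)]])
    then show ?thesis using C(1) by blast
  qed
qed


lemma set_multI: "h \<in> H \<Longrightarrow> k \<in> K \<Longrightarrow> h \<otimes> k \<in> H <#> K"
  unfolding set_mult_def by blast

lemma set_multE: "x \<in> H <#> K \<Longrightarrow> (\<And>h k. h \<in> H \<Longrightarrow> k \<in> K \<Longrightarrow> x = h \<otimes> k \<Longrightarrow> P) \<Longrightarrow> P"
  unfolding set_mult_def by blast

lemma pure_char:
  assumes tf: "torsion_free G" and S: "subgroup S G"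
  shows "pure_subgroup S G \<longleftrightarrow> (\<forall>k::int. \<forall>x\<in>carrier G. k \<noteq> 0 \<longrightarrow> x [^] k \<in> S \<longrightarrow> x \<in> S)"
proof
  assume p: "pure_subgroup S G"
  show "\<forall>k::int. \<forall>x\<in>carrier G. k \<noteq> 0 \<longrightarrow> x [^] k \<in> S \<longrightarrow> x \<in> S"
  proof (intro allI ballI impI)
    fix k :: int and x assume x: "x \<in> carrier G" "k \<noteq> 0" "x [^] k \<in> S"
    have ex: "\<exists>x'\<in>carrier G. x' [^] k = x [^] k" using x(1) by blast
    obtain y where y: "y \<in> S" "y [^] k = x [^] k"
      using p[unfolded pure_subgroup_def, THEN conjunct2, rule_format, OF x(3) ex] by blast
    have yc: "y \<in> carrier G" by (rule subgroup.mem_carrier[OF S y(1)])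
    have "(x \<otimes> inv y) [^] k = x [^] k \<otimes> inv (y [^] k)"
      by (simp only: int_pow_distrib[OF x(1) inv_closed[OF yc]] int_pow_inv[OF yc])
    also have "\<dots> = \<one>" by (simp add: y(2) x(1))
    finally have calc: "(x \<otimes> inv y) [^] k = \<one>" .
    have xyc: "x \<otimes> inv y \<in> carrier G" using x yc by simp
    have e: "x \<otimes> inv y = \<one>" using tf[unfolded torsion_free_def] xyc x(2) calc by blast
    have "x = (x \<otimes> inv y) \<otimes> y" using x yc by (simp add: m_assoc)
    also have "\<dots> = y" using e yc by simp
    finally have "x = y" .
    then show "x \<in> S" using y by simp
  qed
next
  assume h: "\<forall>k::int. \<forall>x\<in>carrier G. k \<noteq> 0 \<longrightarrow> x [^] k \<in> S \<longrightarrow> x \<in> S"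
  show "pure_subgroup S G" unfolding pure_subgroup_def
  proof (intro conjI S allI ballI impI)
    fix k :: int and s assume s: "s \<in> S" "\<exists>x\<in>carrier G. x [^] k = s"
    then obtain x where x: "x \<in> carrier G" "x [^] k = s" by blast
    show "\<exists>y\<in>S. y [^] k = s"
    proof (cases "k = 0")
      case True
      then have "s = \<one>" using x by simp
      moreover have "\<one> \<in> S" using S by (rule subgroup.one_closed)
      moreover have "\<one> [^] k = \<one>" by simp
      ultimately show ?thesis by metis
    next
      case False then show ?thesis using h x s by blast
    qed
  qed
qed

lemma generate_finite_support:
  assumes "x \<in> generate G S"
  shows "\<exists>F. finite F \<and> F \<subseteq> S \<and> x \<in> generate G F"
  using assms
proof (induction rule: generate.induct)
  case one then show ?case using generate.one by blast
next
  case (incl h) then show ?case by (intro exI[of _ "{h}"]) (auto intro: generate.incl)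
next
  case (inv h) then show ?case by (intro exI[of _ "{h}"]) (auto intro: generate.inv)
next
  case (eng h1 h2)
  then obtain F1 F2 where "finite F1" "F1 \<subseteq> S" "h1 \<in> generate G F1" "finite F2" "F2 \<subseteq> S" "h2 \<in> generate G F2" by blast
  then show ?case using mono_generate[of F1 "F1\<union>F2"] mono_generate[of F2 "F1\<union>F2"]
    by (intro exI[of _ "F1 \<union> F2"]) (auto intro: generate.eng)
qed

lemma foldr_mult:
  assumes "set l \<subseteq> carrier G" "b \<in> carrier G"
  shows "foldr (\<otimes>) l b = foldr (\<otimes>) l \<one> \<otimes> b \<and> foldr (\<otimes>) l \<one> \<in> carrier G"
  using assms by (induction l) (auto simp: m_assoc)

lemma generate_countable:
  assumes "countable S" "S \<subseteq> carrier G"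
  shows "countable (generate G S)"
proof -
  let ?L = "lists (S \<union> (\<lambda>s. inv s) ` S)"
  let ?f = "\<lambda>l. foldr (\<otimes>) l \<one>"
  have SI: "S \<union> (\<lambda>s. inv s) ` S \<subseteq> carrier G" using assms(2) by auto
  have "generate G S \<subseteq> ?f ` ?L"
  proof
    fix x assume "x \<in> generate G S"
    then show "x \<in> ?f ` ?L"
    proof (induction rule: generate.induct)
      case one
      show ?case by (rule image_eqI[of _ ?f "[]"]) simp_all
    next
      case (incl h)
      have hc: "h \<in> carrier G" using incl assms(2) by blast
      show ?case by (rule image_eqI[of _ ?f "[h]"]) (simp_all add: hc incl)
    next
      case (inv h)
      have hc: "h \<in> carrier G" using inv assms(2) by blast
      show ?case by (rule image_eqI[of _ ?f "[inv h]"]) (simp_all add: hc inv)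
    next
      case (eng h1 h2)
      obtain l1 where l1: "l1 \<in> ?L" "h1 = ?f l1" using eng.IH(1) by blast
      obtain l2 where l2: "l2 \<in> ?L" "h2 = ?f l2" using eng.IH(2) by blast
      have c: "set l1 \<subseteq> carrier G" "set l2 \<subseteq> carrier G" using l1(1) l2(1) SI by (auto simp: in_lists_conv_set)
      have f2: "?f l2 \<in> carrier G" using foldr_mult[OF c(2), of \<one>] by simp
      have "?f (l1 @ l2) = ?f l1 \<otimes> ?f l2"
        using foldr_mult[OF c(1) f2] by simp
      then have "h1 \<otimes> h2 = ?f (l1 @ l2)" using l1(2) l2(2) by simp
      moreover have "l1 @ l2 \<in> ?L" using l1(1) l2(1) by simp
      ultimately show ?case by (rule image_eqI)
    qed
  qed
  moreover have "countable (S \<union> (\<lambda>s. inv s) ` S)" by (intro countable_Un countable_image assms(1))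
  then have "countable ?L" by (rule countable_lists)
  then have "countable (?f ` ?L)" by (rule countable_image)
  ultimately show ?thesis by (rule countable_subset)
qed

lemma mult_sub_left:
  assumes S: "subgroup S G" and K: "subgroup K G"
  shows "S \<subseteq> S <#> K"
proof
  fix x assume x: "x \<in> S"
  have "x \<otimes> \<one> \<in> S <#> K" by (rule set_multI[OF x subgroup.one_closed[OF K]])
  moreover have "x \<otimes> \<one> = x" using subgroup.mem_carrier[OF S x] by simp
  ultimately show "x \<in> S <#> K" by simp
qed

lemma mult_sub_right:
  assumes S: "subgroup S G" and K: "subgroup K G"
  shows "K \<subseteq> S <#> K"
proof
  fix x assume x: "x \<in> K"
  have "\<one> \<otimes> x \<in> S <#> K" by (rule set_multI[OF subgroup.one_closed[OF S] x])
  moreover have "\<one> \<otimes> x = x" using subgroup.mem_carrier[OF K x] by simp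
  ultimately show "x \<in> S <#> K" by simp
qed

lemma mult_sub_bound:
  assumes "subgroup T G" "S \<subseteq> T" "K \<subseteq> T"
  shows "S <#> K \<subseteq> T"
proof
  fix x assume "x \<in> S <#> K"
  then obtain a b where ab: "a \<in> S" "b \<in> K" "x = a \<otimes> b" by (rule set_multE)
  have "a \<in> T" "b \<in> T" using ab assms by auto
  then have "a \<otimes> b \<in> T" by (rule subgroup.m_closed[OF assms(1)])
  then show "x \<in> T" using ab(3) by simp
qed

lemma mult_one_left:
  assumes "subgroup K G" shows "{\<one>} <#> K = K"
proof
  show "K \<subseteq> {\<one>} <#> K" by (rule mult_sub_right[OF triv_subgroup assms])
  show "{\<one>} <#> K \<subseteq> K" by (rule mult_sub_bound[OF assms]) (use subgroup.one_closed[OF assms] in auto)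
qed

lemma mult_one_right:
  assumes "subgroup K G" shows "K <#> {\<one>} = K"
proof
  show "K \<subseteq> K <#> {\<one>}" by (rule mult_sub_left[OF assms triv_subgroup])
  show "K <#> {\<one>} \<subseteq> K" by (rule mult_sub_bound[OF assms]) (use subgroup.one_closed[OF assms] in auto)
qed

lemma cancel_left:
  assumes z: "z \<in> carrier G" and b: "b \<in> carrier G" and c: "c \<in> carrier G"
  shows "(z \<otimes> b) \<otimes> inv (z \<otimes> c) = b \<otimes> inv c"
proof -
  have "(z \<otimes> b) \<otimes> inv (z \<otimes> c) = (b \<otimes> z) \<otimes> (inv z \<otimes> inv c)"
    by (simp add: inv_mult_group z c m_comm[OF z b] m_comm[of "inv c" "inv z"])
  also have "\<dots> = b \<otimes> ((z \<otimes> inv z) \<otimes> inv c)" by (simp only: m_assoc z b c inv_closed m_closed)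
  also have "\<dots> = b \<otimes> inv c" by (simp only: r_inv[OF z] l_one[OF inv_closed[OF c]])
  finally show ?thesis .
qed

lemma pureD:
  assumes tf: "torsion_free G" and p: "pure_subgroup A G"
    and k: "k \<noteq> (0::int)" and x: "x \<in> carrier G" and xk: "x [^] k \<in> A"
  shows "x \<in> A"
proof -
  have sg: "subgroup A G" using p unfolding pure_subgroup_def by simp
  have "\<forall>k::int. \<forall>x\<in>carrier G. k \<noteq> 0 \<longrightarrow> x [^] k \<in> A \<longrightarrow> x \<in> A"
    using pure_char[OF tf sg] p by simp
  then show ?thesis using k x xk by blast
qed

lemma pureI:
  assumes tf: "torsion_free G" and sg: "subgroup A G"
    and h: "\<And>k x. k \<noteq> (0::int) \<Longrightarrow> x \<in> carrier G \<Longrightarrow> x [^] k \<in> A \<Longrightarrow> x \<in> A"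
  shows "pure_subgroup A G"
proof -
  have "\<forall>k::int. \<forall>x\<in>carrier G. k \<noteq> 0 \<longrightarrow> x [^] k \<in> A \<longrightarrow> x \<in> A" using h by blast
  then show ?thesis using pure_char[OF tf sg] by simp
qed

lemma pure_directed_Union:
  assumes tf: "torsion_free G" and ne: "S \<noteq> {}" and p: "\<And>A. A\<in>S \<Longrightarrow> pure_subgroup A G"
    and d: "\<And>A B. A\<in>S \<Longrightarrow> B\<in>S \<Longrightarrow> \<exists>C\<in>S. A \<union> B \<subseteq> C"
  shows "pure_subgroup (\<Union>S) G"
proof -
  have sg: "\<And>A. A\<in>S \<Longrightarrow> subgroup A G" using p unfolding pure_subgroup_def by blast
  have sgU: "subgroup (\<Union>S) G" by (rule directed_Union_subgroup[OF ne sg d])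
  show ?thesis
  proof (rule pureI[OF tf sgU])
    fix k :: int and x assume x: "k \<noteq> 0" "x \<in> carrier G" "x [^] k \<in> \<Union>S"
    obtain A where A: "A\<in>S" "x [^] k \<in> A" using x(3) by blast
    have "x \<in> A" by (rule pureD[OF tf p[OF A(1)] x(1) x(2) A(2)])
    then show "x \<in> \<Union>S" using A(1) by blast
  qed
qed

end

lemma finite_subset_chain:
  assumes "finite F" "F \<subseteq> Y0 \<union> \<Union>(range (Zs::nat \<Rightarrow> 'a set))" "\<And>i j. i \<le> j \<Longrightarrow> Zs i \<subseteq> Zs j"
  shows "\<exists>m. F \<subseteq> Y0 \<union> Zs m"
  using assms(1,2)
proof (induction F rule: finite_induct)
  case empty then show ?case by simp
next
  case (insert x F)
  then obtain m1 where m1: "F \<subseteq> Y0 \<union> Zs m1" by blast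
  obtain m2 where m2: "x \<in> Y0 \<union> Zs m2" using insert by blast
  have "Zs m1 \<subseteq> Zs (max m1 m2)" "Zs m2 \<subseteq> Zs (max m1 m2)" using assms(3) by auto
  then show ?case using m1 m2 by blast
qed

theorem lemma2:
  fixes G :: "('a, 'b) monoid_scheme" (structure)
    and Gs :: "nat \<Rightarrow> 'a set" and n :: nat and Xn :: "'a set"
  assumes "comm_group G"
    and "torsion_free G"
    and "Gs 0 = {\<one>}"
    and "\<And>m. Gs m \<subset> Gs (Suc m)"
    and "\<And>m. free_subgroup (Gs m) G"
    and "\<And>m. pure_subgroup (Gs m) G"
    and "(\<Union>m. Gs m) = carrier G"
    and "is_basis G (Gs n) Xn"
  shows "G_aleph0_family G (Gs n)
           {A \<in> {generate G Y | Y. Y \<subseteq> Xn}. \<forall>i. pure_subgroup (A <#> Gs i) G}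
       \<and> (\<forall>A \<in> {A \<in> {generate G Y | Y. Y \<subseteq> Xn}. \<forall>i. pure_subgroup (A <#> Gs i) G}.
            pure_subgroup A G)"
proof -
  interpret comm_group G by fact
  note tf = assms(2)
  have sgGs: "\<And>m. subgroup (Gs m) G" using assms(5) unfolding free_subgroup_def by blast
  have sucmono: "\<And>m. Gs m \<subseteq> Gs (Suc m)" using assms(4) by blast
  have monoGs: "\<And>i j. i \<le> j \<Longrightarrow> Gs i \<subseteq> Gs j"
    by (rule lift_Suc_mono_le[of Gs, OF sucmono])
  have pureGs: "\<And>m k x. k \<noteq> (0::int) \<Longrightarrow> x \<in> carrier G \<Longrightarrow> x [^] k \<in> Gs m \<Longrightarrow> x \<in> Gs m"
    by (rule pureD[OF tf assms(6)])
  have b: "Xn \<subseteq> Gs n \<and> generate G Xn = Gs n" using assms(8) unfolding is_basis_def by blast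
  have XGs: "Xn \<subseteq> Gs n" using b by blast
  have genX: "generate G Xn = Gs n" using b by blast
  have Xc: "Xn \<subseteq> carrier G" using XGs subgroup.subset[OF sgGs[of n]] by (rule subset_trans)
  have genGs: "\<And>Y. Y \<subseteq> Xn \<Longrightarrow> generate G Y \<subseteq> Gs n"
  proof -
    fix Y assume "Y \<subseteq> Xn"
    then have "Y \<subseteq> Gs n" using XGs by (rule subset_trans)
    then show "generate G Y \<subseteq> Gs n" by (rule generate_subgroup_incl[OF _ sgGs])
  qed
  have sggen: "\<And>Y. Y \<subseteq> carrier G \<Longrightarrow> subgroup (generate G Y) G"
    by (rule generate_is_subgroup)
  have sggenX: "\<And>Y. Y \<subseteq> Xn \<Longrightarrow> subgroup (generate G Y) G"
  proof -
    fix Y assume "Y \<subseteq> Xn" then have "Y \<subseteq> carrier G" using Xc by (rule subset_trans)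
    then show "subgroup (generate G Y) G" by (rule generate_is_subgroup)
  qed
  have Gsmax1: "Gs n \<subseteq> Gs (max n i)" for i by (rule monoGs) simp
  have Gsmax2: "Gs i \<subseteq> Gs (max n i)" for i by (rule monoGs) simp
  note Gsmax = Gsmax1 Gsmax2
  have AGs: "\<And>A i. A \<subseteq> Gs n \<Longrightarrow> A <#> Gs i \<subseteq> Gs (max n i)"
  proof -
    fix A i assume A: "A \<subseteq> Gs n"
    show "A <#> Gs i \<subseteq> Gs (max n i)"
      by (rule mult_sub_bound[OF sgGs]) (use A Gsmax[of i] in blast)+
  qed
  have GnGi: "\<And>i. Gs n <#> Gs i = Gs (max n i)"
  proof -
    fix i
    show "Gs n <#> Gs i = Gs (max n i)"
    proof
      show "Gs n <#> Gs i \<subseteq> Gs (max n i)" by (rule AGs) simp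
      show "Gs (max n i) \<subseteq> Gs n <#> Gs i"
      proof (cases "n \<le> i")
        case True
        then have "Gs (max n i) = Gs i" by (simp add: max_def)
        then show ?thesis using mult_sub_right[OF sgGs sgGs] by simp
      next
        case False
        then have "Gs (max n i) = Gs n" by (simp add: max_def)
        then show ?thesis using mult_sub_left[OF sgGs sgGs] by simp
      qed
    qed
  qed
  have fin_supp: "\<And>x. x \<in> Gs n \<Longrightarrow> \<exists>F. finite F \<and> F \<subseteq> Xn \<and> x \<in> generate G F"
  proof -
    fix x assume "x \<in> Gs n"
    then have "x \<in> generate G Xn" using genX by simp
    then show "\<exists>F. finite F \<and> F \<subseteq> Xn \<and> x \<in> generate G F" by (rule generate_finite_support)
  qed
  define C where "C = {A \<in> {generate G Y | Y. Y \<subseteq> Xn}. \<forall>i. pure_subgroup (A <#> Gs i) G}"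
  have CD: "\<And>A. A \<in> C \<Longrightarrow> \<exists>Y. Y \<subseteq> Xn \<and> A = generate G Y \<and> (\<forall>i. pure_subgroup (A <#> Gs i) G)"
    unfolding C_def by blast
  have CI: "\<And>Y. Y \<subseteq> Xn \<Longrightarrow> (\<forall>i. pure_subgroup (generate G Y <#> Gs i) G) \<Longrightarrow> generate G Y \<in> C"
    unfolding C_def by blast
  have part2: "\<forall>A\<in>C. pure_subgroup A G"
  proof
    fix A assume "A \<in> C"
    then obtain Y where Y: "Y \<subseteq> Xn" "A = generate G Y" "\<forall>i. pure_subgroup (A <#> Gs i) G"
      using CD by blast
    have sgA: "subgroup A G" using sggenX[OF Y(1)] Y(2) by simp
    have "A <#> Gs 0 = A" unfolding assms(3) by (rule mult_one_right[OF sgA])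
    then show "pure_subgroup A G" using Y(3) by metis
  qed
  have partA: "\<forall>A\<in>C. subgroup A G \<and> A \<subseteq> Gs n"
  proof
    fix A assume "A \<in> C"
    then obtain Y where Y: "Y \<subseteq> Xn" "A = generate G Y" using CD by blast
    then show "subgroup A G \<and> A \<subseteq> Gs n" using genGs[OF Y(1)] sggenX[OF Y(1)] by simp
  qed
  have partB: "{\<one>} \<in> C"
  proof -
    have "\<And>i. {\<one>} <#> Gs i = Gs i" by (rule mult_one_left[OF sgGs])
    then have "\<forall>i. pure_subgroup (generate G {} <#> Gs i) G" using assms(6) by (simp add: generate_empty)
    then have "generate G {} \<in> C" by (intro CI) simp_all
    then show ?thesis by (simp add: generate_empty)
  qed
  have partC: "Gs n \<in> C"
  proof -
    have "\<forall>i. pure_subgroup (generate G Xn <#> Gs i) G" using GnGi assms(6) genX by simp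
    then have "generate G Xn \<in> C" by (intro CI) simp_all
    then show ?thesis by (simp add: genX)
  qed
  have partD: "\<forall>S. S \<subseteq> C \<longrightarrow> S \<noteq> {} \<longrightarrow> (\<forall>A\<in>S. \<forall>B\<in>S. A \<subseteq> B \<or> B \<subseteq> A) \<longrightarrow> \<Union>S \<in> C"
  proof (intro allI impI)
    fix S assume SC: "S \<subseteq> C" and Sne: "S \<noteq> {}" and ch: "\<forall>A\<in>S. \<forall>B\<in>S. A \<subseteq> B \<or> B \<subseteq> A"
    have dir: "\<exists>C\<in>S. A \<union> B \<subseteq> C" if AB: "A \<in> S" "B \<in> S" for A B
    proof (cases "A \<subseteq> B")
      case True then show ?thesis using AB(2) by blast
    next
      case False then have "B \<subseteq> A" using ch AB by blast
      then show ?thesis using AB(1) by blast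
    qed
    define Yf where "Yf A = (SOME Y. Y \<subseteq> Xn \<and> A = generate G Y)" for A
    have Yf: "Yf A \<subseteq> Xn \<and> A = generate G (Yf A)" if A: "A \<in> S" for A
    proof -
      have "A \<in> C" using A SC by blast
      then have "\<exists>Y. Y \<subseteq> Xn \<and> A = generate G Y" using CD by blast
      then show "Yf A \<subseteq> Xn \<and> A = generate G (Yf A)" unfolding Yf_def by (rule someI_ex)
    qed
    define Y where "Y = \<Union>(Yf ` S)"
    have sgS: "subgroup A G" if "A \<in> S" for A using partA SC that by blast
    have sgU: "subgroup (\<Union>S) G"
      by (rule directed_Union_subgroup[OF Sne sgS dir])
    have YX: "Y \<subseteq> Xn" unfolding Y_def using Yf by blast
    have YU: "Y \<subseteq> \<Union>S"
    proof
      fix y assume "y \<in> Y"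
      then obtain A where A: "A \<in> S" "y \<in> Yf A" unfolding Y_def by blast
      then have "y \<in> generate G (Yf A)" by (rule generate.incl[of y, OF A(2)] | simp add: generate.incl)
      then have "y \<in> A" using Yf[OF A(1)] by simp
      then show "y \<in> \<Union>S" using A(1) by blast
    qed
    have eq: "\<Union>S = generate G Y"
    proof
      show "generate G Y \<subseteq> \<Union>S" by (rule generate_subgroup_incl[OF YU sgU])
      show "\<Union>S \<subseteq> generate G Y"
      proof
        fix x assume "x \<in> \<Union>S"
        then obtain A where A: "A \<in> S" "x \<in> A" by blast
        then have "x \<in> generate G (Yf A)" using Yf[OF A(1)] by simp
        moreover have "Yf A \<subseteq> Y" unfolding Y_def using A(1) by blast
        ultimately show "x \<in> generate G Y" using mono_generate by blast
      qed
    qed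
    have pur: "pure_subgroup (\<Union>S <#> Gs i) G" for i
    proof -
      have eqi: "\<Union>S <#> Gs i = \<Union>((\<lambda>A. A <#> Gs i) ` S)" unfolding set_mult_def by blast
      have pi: "pure_subgroup (A <#> Gs i) G" if "A \<in> S" for A
      proof -
        have "A \<in> C" using that SC by blast
        then show ?thesis using CD by blast
      qed
      have "pure_subgroup (\<Union>((\<lambda>A. A <#> Gs i) ` S)) G"
      proof (rule pure_directed_Union[OF tf])
        show "(\<lambda>A. A <#> Gs i) ` S \<noteq> {}" using Sne by blast
        show "\<And>A. A \<in> (\<lambda>A. A <#> Gs i) ` S \<Longrightarrow> pure_subgroup A G" using pi by blast
        show "\<exists>C\<in>(\<lambda>A. A <#> Gs i) ` S. A \<union> B \<subseteq> C"
          if AB: "A \<in> (\<lambda>A. A <#> Gs i) ` S" "B \<in> (\<lambda>A. A <#> Gs i) ` S" for A B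
        proof -
          obtain A' where A': "A' \<in> S" "A = A' <#> Gs i" using AB(1) by blast
          obtain B' where B': "B' \<in> S" "B = B' <#> Gs i" using AB(2) by blast
          obtain C' where C': "C' \<in> S" "A' \<union> B' \<subseteq> C'" using dir[OF A'(1) B'(1)] by blast
          have "A \<subseteq> C' <#> Gs i" unfolding A'(2) by (rule mono_set_mult) (use C' in auto)
          moreover have "B \<subseteq> C' <#> Gs i" unfolding B'(2) by (rule mono_set_mult) (use C' in auto)
          ultimately show ?thesis using C'(1) by blast
        qed
      qed
      then show ?thesis unfolding eqi .
    qed
    have "generate G Y \<in> C" by (rule CI[OF YX]) (use pur eq in simp)
    then show "\<Union>S \<in> C" using eq by simp
  qed
  have partE: "\<forall>A0\<in>C. \<forall>H. H \<subseteq> Gs n \<longrightarrow> countable H \<longrightarrow>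
        (\<exists>A\<in>C. A0 \<union> H \<subseteq> A \<and> countable_quotient G A A0)"
  proof (intro ballI allI impI)
    fix A0 H assume A0C: "A0 \<in> C" and HG: "H \<subseteq> Gs n" and Hc: "countable H"
    obtain Y0 where Y0: "Y0 \<subseteq> Xn" "A0 = generate G Y0" and pA0: "\<forall>i. pure_subgroup (A0 <#> Gs i) G"
      using CD[OF A0C] by blast
    have sgA0: "subgroup A0 G" using sggenX[OF Y0(1)] Y0(2) by simp
    have A0n: "A0 \<subseteq> Gs n" using genGs[OF Y0(1)] Y0(2) by simp
    have sgA0i: "\<And>i. subgroup (A0 <#> Gs i) G" by (rule mult_subgroups[OF sgA0 sgGs])
    have pA0': "\<And>i k x. k \<noteq> (0::int) \<Longrightarrow> x \<in> carrier G \<Longrightarrow> x [^] k \<in> A0 <#> Gs i \<Longrightarrow> x \<in> A0 <#> Gs i"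
    proof -
      fix i k x assume "k \<noteq> (0::int)" "x \<in> carrier G" "x [^] k \<in> A0 <#> Gs i"
      then show "x \<in> A0 <#> Gs i" using pureD[OF tf pA0[rule_format, of i]] by blast
    qed
    define P where "P i z k x \<longleftrightarrow> x \<in> carrier G \<and> (\<exists>a\<in>A0 <#> Gs i. x [^] (k::int) = z \<otimes> a)" for i z k x
    define rep where "rep i z k = (SOME x. P i z k x)" for i z k
    define wit where "wit i z k = (SOME F. finite F \<and> F \<subseteq> Xn \<and> rep i z k \<in> generate G F <#> Gs i)" for i z k
    define step where "step Z = Z \<union> (\<Union>(i,z,k) \<in> UNIV \<times> generate G Z \<times> UNIV.
        if k \<noteq> 0 \<and> (\<exists>x. P i z k x) then wit i z k else {})" for Z
    define Z0 where "Z0 = (\<Union>h\<in>H. SOME F. finite F \<and> F \<subseteq> Xn \<and> h \<in> generate G F)"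
    define Zs where "Zs m = (step ^^ m) Z0" for m
    define Zinf where "Zinf = \<Union>(range Zs)"
    have wit_ok: "finite (wit i z k) \<and> wit i z k \<subseteq> Xn \<and> rep i z k \<in> generate G (wit i z k) <#> Gs i"
      if W: "Z \<subseteq> Xn" "z \<in> generate G Z" "k \<noteq> 0" "P i z k x" for Z i z k x
    proof -
      have Pr: "P i z k (rep i z k)" unfolding rep_def using W(4) by (rule someI)
      then obtain a where a: "a \<in> A0 <#> Gs i" "rep i z k [^] k = z \<otimes> a" and rc: "rep i z k \<in> carrier G"
        unfolding P_def by blast
      have "z \<in> Gs n" using genGs[OF W(1)] W(2) by blast
      then have zm: "z \<in> Gs (max n i)" using Gsmax1 by blast
      have am: "a \<in> Gs (max n i)" using AGs[OF A0n] a(1) by blast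
      have "z \<otimes> a \<in> Gs (max n i)" by (rule subgroup.m_closed[OF sgGs zm am])
      then have "rep i z k [^] k \<in> Gs (max n i)" using a(2) by simp
      then have "rep i z k \<in> Gs (max n i)" by (rule pureGs[OF W(3) rc])
      then have "rep i z k \<in> Gs n <#> Gs i" using GnGi by simp
      then obtain m g where mg: "m \<in> Gs n" "g \<in> Gs i" "rep i z k = m \<otimes> g" by (rule set_multE)
      obtain F where F: "finite F" "F \<subseteq> Xn" "m \<in> generate G F" using fin_supp[OF mg(1)] by blast
      have "m \<otimes> g \<in> generate G F <#> Gs i" by (rule set_multI[OF F(3) mg(2)])
      then have "rep i z k \<in> generate G F <#> Gs i" using mg(3) by simp
      then have "\<exists>F. finite F \<and> F \<subseteq> Xn \<and> rep i z k \<in> generate G F <#> Gs i"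
        using F(1,2) by blast
      then show ?thesis unfolding wit_def by (rule someI_ex)
    qed
    have step_ok: "step Z \<subseteq> Xn \<and> countable (step Z) \<and> Z \<subseteq> step Z"
      if Z: "Z \<subseteq> Xn" "countable Z" for Z
    proof -
      let ?I = "(UNIV :: nat set) \<times> generate G Z \<times> (UNIV :: int set)"
      let ?f = "\<lambda>(i::nat,z,k::int). if k \<noteq> 0 \<and> (\<exists>x. P i z k x) then wit i z k else {}"
      have Zc: "Z \<subseteq> carrier G" using Z(1) Xc by (rule subset_trans)
      have gc: "countable (generate G Z)" by (rule generate_countable[OF Z(2) Zc])
      have "countable ?I" by (intro countable_SIGMA countableI_type gc)
      moreover have "countable (?f t)" if t: "t \<in> ?I" for t
      proof -
        obtain i z k where t': "t = (i, z, k)" by (cases t) auto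
        have z: "z \<in> generate G Z" using t t' by simp
        show ?thesis
        proof (cases "k \<noteq> 0 \<and> (\<exists>x. P i z k x)")
          case True
          then obtain x where "k \<noteq> 0" "P i z k x" by blast
          then have "finite (wit i z k)" using wit_ok[OF Z(1) z] by blast
          then show ?thesis using True t' by (simp add: countable_finite)
        next
          case False then show ?thesis using t' by auto
        qed
      qed
      ultimately have c: "countable (\<Union>(?f ` ?I))" by (rule countable_UN)
      have s: "?f t \<subseteq> Xn" if t: "t \<in> ?I" for t
      proof -
        obtain i z k where t': "t = (i, z, k)" by (cases t) auto
        have z: "z \<in> generate G Z" using t t' by simp
        show ?thesis
        proof (cases "k \<noteq> 0 \<and> (\<exists>x. P i z k x)")
          case True
          then obtain x where "k \<noteq> 0" "P i z k x" by blast
          then have "wit i z k \<subseteq> Xn" using wit_ok[OF Z(1) z] by blast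
          then show ?thesis using True t' by simp
        next
          case False then show ?thesis using t' by auto
        qed
      qed
      have e: "step Z = Z \<union> \<Union>(?f ` ?I)" unfolding step_def by simp
      have "countable (step Z)" unfolding e by (rule countable_Un[OF Z(2) c])
      moreover have "step Z \<subseteq> Xn" unfolding e using s Z(1) by blast
      moreover have "Z \<subseteq> step Z" unfolding e by (rule Un_upper1)
      ultimately show ?thesis by blast
    qed
    have fin_someI: "finite (SOME F. finite F \<and> F \<subseteq> Xn \<and> h \<in> generate G F)
        \<and> (SOME F. finite F \<and> F \<subseteq> Xn \<and> h \<in> generate G F) \<subseteq> Xn
        \<and> h \<in> generate G (SOME F. finite F \<and> F \<subseteq> Xn \<and> h \<in> generate G F)" if h: "h \<in> Gs n" for h
      using fin_supp[OF h] by (rule someI_ex)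
    have Z0X: "Z0 \<subseteq> Xn" unfolding Z0_def using fin_someI HG by blast
    have Z0c: "countable Z0" unfolding Z0_def
    proof (rule countable_UN[OF Hc])
      fix h assume "h \<in> H"
      then have "finite (SOME F. finite F \<and> F \<subseteq> Xn \<and> h \<in> generate G F)" using fin_someI HG by blast
      then show "countable (SOME F. finite F \<and> F \<subseteq> Xn \<and> h \<in> generate G F)" by (rule countable_finite)
    qed
    have HZ0: "H \<subseteq> generate G Z0"
    proof
      fix h assume hH: "h \<in> H"
      then have "h \<in> generate G (SOME F. finite F \<and> F \<subseteq> Xn \<and> h \<in> generate G F)" using fin_someI HG by blast
      moreover have "(SOME F. finite F \<and> F \<subseteq> Xn \<and> h \<in> generate G F) \<subseteq> Z0" unfolding Z0_def using hH by blast
      ultimately show "h \<in> generate G Z0" using mono_generate by blast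
    qed
    have ZsS: "Zs (Suc m) = step (Zs m)" for m unfolding Zs_def by simp
    have Zs0: "Zs 0 = Z0" unfolding Zs_def by simp
    have Zs_ok: "Zs m \<subseteq> Xn \<and> countable (Zs m)" for m
    proof (induction m)
      case 0 then show ?case using Z0X Z0c Zs0 by simp
    next
      case (Suc m)
      then have "step (Zs m) \<subseteq> Xn \<and> countable (step (Zs m))" using step_ok by blast
      then show ?case using ZsS by simp
    qed
    have Zs_suc: "Zs m \<subseteq> Zs (Suc m)" for m using step_ok[of "Zs m"] Zs_ok[of m] ZsS[of m] by simp
    have Zs_mono: "\<And>i j. i \<le> j \<Longrightarrow> Zs i \<subseteq> Zs j"
      by (rule lift_Suc_mono_le[of Zs, OF Zs_suc])
    have ZinfX: "Zinf \<subseteq> Xn" unfolding Zinf_def using Zs_ok by blast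
    have Zinfc: "countable Zinf" unfolding Zinf_def using Zs_ok by blast
    have decomp: "generate G (Y0 \<union> Z) \<subseteq> A0 <#> generate G Z" if Z: "Z \<subseteq> Xn" for Z
    proof (rule generate_subgroup_incl)
      have sgZ: "subgroup (generate G Z) G" by (rule sggenX[OF Z])
      show "subgroup (A0 <#> generate G Z) G" by (rule mult_subgroups[OF sgA0 sgZ])
      have "Y0 \<subseteq> A0" using Y0(2) generate.incl[of _ Y0 G] by blast
      moreover have "A0 \<subseteq> A0 <#> generate G Z" by (rule mult_sub_left[OF sgA0 sgZ])
      moreover have "Z \<subseteq> generate G Z" using generate.incl[of _ Z G] by blast
      moreover have "generate G Z \<subseteq> A0 <#> generate G Z" by (rule mult_sub_right[OF sgA0 sgZ])
      ultimately show "Y0 \<union> Z \<subseteq> A0 <#> generate G Z" by blast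
    qed
    have closure_step: "x' \<in> generate G (Y0 \<union> step Z) <#> Gs i"
      if Z: "Z \<subseteq> Xn" "countable Z" and x': "x' \<in> carrier G" "k \<noteq> (0::int)" "x' [^] k \<in> generate G (Y0 \<union> Z) <#> Gs i"
      for Z x' k i
    proof -
      let ?T = "generate G (Y0 \<union> step Z)"
      have sZ: "step Z \<subseteq> Xn" "Z \<subseteq> step Z" using step_ok[OF Z] by auto
      have YsZ: "Y0 \<union> step Z \<subseteq> Xn" using Y0(1) sZ(1) by blast
      have sgT: "subgroup ?T G" by (rule sggenX[OF YsZ])
      have sgTi: "subgroup (?T <#> Gs i) G" by (rule mult_subgroups[OF sgT sgGs])
      obtain b g where bg: "b \<in> generate G (Y0 \<union> Z)" "g \<in> Gs i" "x' [^] k = b \<otimes> g"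
        using x'(3) by (rule set_multE)
      have "b \<in> A0 <#> generate G Z" using decomp[OF Z(1)] bg(1) by blast
      then obtain a0 z where az: "a0 \<in> A0" "z \<in> generate G Z" "b = a0 \<otimes> z"
        by (rule set_multE)
      have a0c: "a0 \<in> carrier G" by (rule subgroup.mem_carrier[OF sgA0 az(1)])
      have zc: "z \<in> carrier G" by (rule subgroup.mem_carrier[OF sggenX[OF Z(1)] az(2)])
      have gc: "g \<in> carrier G" by (rule subgroup.mem_carrier[OF sgGs bg(2)])
      have a': "a0 \<otimes> g \<in> A0 <#> Gs i" by (rule set_multI[OF az(1) bg(2)])
      have eq1: "x' [^] k = z \<otimes> (a0 \<otimes> g)" using bg(3) az(3) by (simp add: m_comm[OF a0c zc] m_assoc a0c zc gc)
      have Px': "P i z k x'" unfolding P_def using x'(1) a' eq1 by blast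
      have Pr: "P i z k (rep i z k)" unfolding rep_def using Px' by (rule someI)
      then obtain a'' where a'': "a'' \<in> A0 <#> Gs i" "rep i z k [^] k = z \<otimes> a''" and rc: "rep i z k \<in> carrier G"
        unfolding P_def by blast
      have W: "finite (wit i z k) \<and> wit i z k \<subseteq> Xn \<and> rep i z k \<in> generate G (wit i z k) <#> Gs i"
        by (rule wit_ok[OF Z(1) az(2) x'(2) Px'])
      have mem: "(i, z, k) \<in> (UNIV :: nat set) \<times> generate G Z \<times> (UNIV :: int set)" using az(2) by simp
      have cond: "k \<noteq> 0 \<and> (\<exists>x. P i z k x)" using x'(2) Px' by blast
      have Wsub: "wit i z k \<subseteq> step Z"
      proof
        fix y assume y: "y \<in> wit i z k"
        have "y \<in> (\<lambda>(i::nat,z,k::int). if k \<noteq> 0 \<and> (\<exists>x. P i z k x) then wit i z k else {}) (i, z, k)"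
          using y cond by simp
        then show "y \<in> step Z" unfolding step_def by (rule UnI2[OF UN_I[OF mem]])
      qed
      have a''c: "a'' \<in> carrier G" by (rule subgroup.mem_carrier[OF sgA0i a''(1)])
      have a'c: "a0 \<otimes> g \<in> carrier G" using a0c gc by simp
      have "(x' \<otimes> inv rep i z k) [^] k = x' [^] k \<otimes> inv (rep i z k [^] k)"
        by (simp only: int_pow_distrib[OF x'(1) inv_closed[OF rc]] int_pow_inv[OF rc])
      also have "\<dots> = (z \<otimes> (a0 \<otimes> g)) \<otimes> inv (z \<otimes> a'')" by (simp only: eq1 a''(2))
      also have "\<dots> = (a0 \<otimes> g) \<otimes> inv a''"
        by (rule cancel_left[OF zc a'c a''c])
      finally have pe: "(x' \<otimes> inv rep i z k) [^] k = (a0 \<otimes> g) \<otimes> inv a''" .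
      have "inv a'' \<in> A0 <#> Gs i" by (rule subgroup.m_inv_closed[OF sgA0i a''(1)])
      then have "(a0 \<otimes> g) \<otimes> inv a'' \<in> A0 <#> Gs i" by (rule subgroup.m_closed[OF sgA0i a'])
      then have pk: "(x' \<otimes> inv rep i z k) [^] k \<in> A0 <#> Gs i" using pe by simp
      have xc2: "x' \<otimes> inv rep i z k \<in> carrier G" using x'(1) rc by simp
      have d: "x' \<otimes> inv rep i z k \<in> A0 <#> Gs i" by (rule pA0'[OF x'(2) xc2 pk])
      have A0T: "A0 \<subseteq> ?T" unfolding Y0(2) by (rule mono_generate) blast
      have WT: "generate G (wit i z k) \<subseteq> ?T" by (rule mono_generate) (use Wsub in blast)
      have "A0 <#> Gs i \<subseteq> ?T <#> Gs i" by (rule mono_set_mult[OF A0T]) simp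
      then have d': "x' \<otimes> inv rep i z k \<in> ?T <#> Gs i" using d by blast
      have "generate G (wit i z k) <#> Gs i \<subseteq> ?T <#> Gs i" by (rule mono_set_mult[OF WT]) simp
      then have r': "rep i z k \<in> ?T <#> Gs i" using W by blast
      have "(x' \<otimes> inv rep i z k) \<otimes> rep i z k \<in> ?T <#> Gs i"
        by (rule subgroup.m_closed[OF sgTi d' r'])
      moreover have "(x' \<otimes> inv rep i z k) \<otimes> rep i z k = x'" using x'(1) rc by (simp add: m_assoc)
      ultimately show ?thesis by simp
    qed
    define A where "A = generate G (Y0 \<union> Zinf)"
    have YA: "Y0 \<union> Zinf \<subseteq> Xn" using Y0(1) ZinfX by blast
    have sgA: "subgroup A G" unfolding A_def by (rule sggenX[OF YA])
    have pureA: "pure_subgroup (A <#> Gs i) G" for i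
    proof -
      have sgAi: "subgroup (A <#> Gs i) G" by (rule mult_subgroups[OF sgA sgGs])
      show ?thesis
      proof (rule pureI[OF tf sgAi])
        fix k :: int and x assume x: "k \<noteq> 0" "x \<in> carrier G" "x [^] k \<in> A <#> Gs i"
        obtain b g where bg: "b \<in> A" "g \<in> Gs i" "x [^] k = b \<otimes> g" using x(3) by (rule set_multE)
        obtain F where F: "finite F" "F \<subseteq> Y0 \<union> Zinf" "b \<in> generate G F"
          using generate_finite_support[of b "Y0 \<union> Zinf"] bg(1) unfolding A_def by blast
        obtain m where m: "F \<subseteq> Y0 \<union> Zs m"
          using finite_subset_chain[of F Y0 Zs, OF F(1) _ Zs_mono] F(2) unfolding Zinf_def by blast
        have "generate G F \<subseteq> generate G (Y0 \<union> Zs m)" by (rule mono_generate[OF m])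
        then have "b \<in> generate G (Y0 \<union> Zs m)" using F(3) by blast
        then have "b \<otimes> g \<in> generate G (Y0 \<union> Zs m) <#> Gs i" by (rule set_multI[OF _ bg(2)])
        then have "x [^] k \<in> generate G (Y0 \<union> Zs m) <#> Gs i" using bg(3) by simp
        then have "x \<in> generate G (Y0 \<union> step (Zs m)) <#> Gs i"
          using closure_step[of "Zs m" x k i] Zs_ok[of m] x(1,2) by blast
        then have x1: "x \<in> generate G (Y0 \<union> Zs (Suc m)) <#> Gs i" using ZsS[of m] by simp
        have "generate G (Y0 \<union> Zs (Suc m)) \<subseteq> A"
          unfolding A_def Zinf_def by (rule mono_generate) blast
        then have "generate G (Y0 \<union> Zs (Suc m)) <#> Gs i \<subseteq> A <#> Gs i" by (rule mono_set_mult) simp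
        then show "x \<in> A <#> Gs i" using x1 by blast
      qed
    qed
    have AC: "A \<in> C" unfolding A_def by (rule CI[OF YA]) (use pureA A_def in simp)
    have A0A: "A0 \<subseteq> A" unfolding A_def Y0(2) by (rule mono_generate) blast
    have HA: "H \<subseteq> A"
    proof -
      have "Z0 \<subseteq> Zinf" unfolding Zinf_def using Zs0 by blast
      then have "Z0 \<subseteq> Y0 \<union> Zinf" by blast
      then have "generate G Z0 \<subseteq> A" unfolding A_def by (rule mono_generate)
      then show ?thesis using HZ0 by blast
    qed
    have cq: "countable_quotient G A A0"
    proof -
      have "{A0 #> a | a. a \<in> A} \<subseteq> (\<lambda>z. A0 #> z) ` generate G Zinf"
      proof
        fix c assume "c \<in> {A0 #> a | a. a \<in> A}"
        then obtain a where a: "a \<in> A" "c = A0 #> a" by blast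
        have "a \<in> A0 <#> generate G Zinf" using decomp[OF ZinfX] a(1) unfolding A_def by blast
        then obtain a0 z where az: "a0 \<in> A0" "z \<in> generate G Zinf" "a = a0 \<otimes> z"
          by (rule set_multE)
        have a0c: "a0 \<in> carrier G" by (rule subgroup.mem_carrier[OF sgA0 az(1)])
        have zc: "z \<in> carrier G" by (rule subgroup.mem_carrier[OF sggenX[OF ZinfX] az(2)])
        have "A0 #> a = (A0 #> a0) #> z"
          unfolding az(3) by (rule coset_mult_assoc[symmetric, OF subgroup.subset[OF sgA0] a0c zc])
        also have "A0 #> a0 = A0" by (rule coset_join2[OF a0c sgA0 az(1)])
        finally have "c = A0 #> z" using a(2) by simp
        then show "c \<in> (\<lambda>z. A0 #> z) ` generate G Zinf" using az(2) by blast
      qed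
      moreover have "countable ((\<lambda>z. A0 #> z) ` generate G Zinf)"
        by (rule countable_image[OF generate_countable[OF Zinfc subset_trans[OF ZinfX Xc]]])
      ultimately show ?thesis unfolding countable_quotient_def by (rule countable_subset)
    qed
    show "\<exists>A\<in>C. A0 \<union> H \<subseteq> A \<and> countable_quotient G A A0" using AC A0A HA cq by blast
  qed
  have "G_aleph0_family G (Gs n) C"
    unfolding G_aleph0_family_def using partA partB partC partD partE by (intro conjI)
  then show ?thesis using part2 unfolding C_def by (rule conjI)
qed

end
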